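(* Let $f:\mathbb{R}\to(0,\infty)$ be $C^4$, unimodal with maximum at $\mu$, of the form $f=e^{-H}$ with $H$ regularly varying (there is $\alpha>0$ with $H(tx)/H(t)\to x^\alpha$ as $|t|\to\infty$ for all $x>0$), and with $|(\log f)''''|<M$ for some $M>0$. Then for every $\beta>0$ and $\ell>0$, $$\ell^2\left[\tfrac12V(\beta)-I(\beta)+\tfrac{1}{4\beta}R(\beta)\right]=-\ell^2\,\mathrm{Var}_\beta\!\left(h(X)-\tfrac12k(X)\right).$$
   Context: $h=\log f$, $k(x)=(x-\mu)h'(x)$, $r(x)=(x-\mu)^2h''(x)$; $\mathbb{E}_\beta,\mathrm{Var}_\beta,\mathrm{Cov}_\beta$ are moments under $f^\beta/\int f^\beta$. $I(\beta)=\mathrm{Var}_\beta(h(X))$, $V(\beta)=\mathrm{Cov}_\beta(h(X),k(X))$, $R(\beta)=\mathbb{E}_\beta[r(X)-k(X)]$. *)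

theory Defs
  imports "HOL-Analysis.Analysis"
begin

definition C4 :: "(real \<Rightarrow> real) \<Rightarrow> bool" where
  "C4 f \<longleftrightarrow> (\<forall>j<4. \<forall>x. ((deriv ^^ j) f) differentiable (at x))
              \<and> continuous_on UNIV ((deriv ^^ 4) f)"

definition Ebeta :: "(real \<Rightarrow> real) \<Rightarrow> real \<Rightarrow> (real \<Rightarrow> real) \<Rightarrow> real" where
  "Ebeta f \<beta> g = (LINT x|lborel. g x * f x powr \<beta>) / (LINT x|lborel. f x powr \<beta>)"

definition Covbeta :: "(real \<Rightarrow> real) \<Rightarrow> real \<Rightarrow> (real \<Rightarrow> real) \<Rightarrow> (real \<Rightarrow> real) \<Rightarrow> real" where
  "Covbeta f \<beta> g1 g2 =
     Ebeta f \<beta> (\<lambda>x. (g1 x - Ebeta f \<beta> g1) * (g2 x - Ebeta f \<beta> g2))"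

definition Varbeta :: "(real \<Rightarrow> real) \<Rightarrow> real \<Rightarrow> (real \<Rightarrow> real) \<Rightarrow> real" where
  "Varbeta f \<beta> g = Ebeta f \<beta> (\<lambda>x. (g x - Ebeta f \<beta> g)\<^sup>2)"

definition hfun :: "(real \<Rightarrow> real) \<Rightarrow> real \<Rightarrow> real" where
  "hfun f = (\<lambda>x. ln (f x))"

definition kfun :: "(real \<Rightarrow> real) \<Rightarrow> real \<Rightarrow> real \<Rightarrow> real" where
  "kfun f \<mu> = (\<lambda>x. (x - \<mu>) * deriv (hfun f) x)"

definition rfun :: "(real \<Rightarrow> real) \<Rightarrow> real \<Rightarrow> real \<Rightarrow> real" where
  "rfun f \<mu> = (\<lambda>x. (x - \<mu>)\<^sup>2 * deriv (deriv (hfun f)) x)"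

definition Ifun :: "(real \<Rightarrow> real) \<Rightarrow> real \<Rightarrow> real" where
  "Ifun f \<beta> = Varbeta f \<beta> (hfun f)"

definition Vfun :: "(real \<Rightarrow> real) \<Rightarrow> real \<Rightarrow> real \<Rightarrow> real" where
  "Vfun f \<mu> \<beta> = Covbeta f \<beta> (hfun f) (kfun f \<mu>)"

definition Rfun :: "(real \<Rightarrow> real) \<Rightarrow> real \<Rightarrow> real \<Rightarrow> real" where
  "Rfun f \<mu> \<beta> = Ebeta f \<beta> (\<lambda>x. rfun f \<mu> x - kfun f \<mu> x)"

end

theory Submission
  imports Defs "HOL-Real_Asymp.Real_Asymp"
begin


lemma FTC_zero:
  fixes F F' :: "real \<Rightarrow> real"
  assumes D: "\<And>x. DERIV F x :> F' x" and C: "\<And>x. isCont F' x" and I: "integrable lborel F'"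
    and T: "(F \<longlongrightarrow> 0) at_top" and B: "(F \<longlongrightarrow> 0) at_bot"
  shows "(LINT x|lborel. F' x) = 0"
proof -
  have "(LBINT x=-\<infinity>..\<infinity>. F' x) = 0 - 0"
  proof (rule interval_integral_FTC_integrable[where F=F])
    show "-\<infinity> < (\<infinity>::ereal)" by simp
    show "(F has_vector_derivative F' x) (at x)" for x
      using D has_real_derivative_iff_has_vector_derivative by blast
    show "isCont F' x" for x using C by blast
    show "set_integrable lborel (einterval (- \<infinity>) \<infinity>) F'"
      using I by (simp add: set_integrable_def)
    show "((F \<circ> real_of_ereal) \<longlongrightarrow> 0) (at_right (-\<infinity>))"
      using B by (simp add: ereal_tendsto_simps1)
    show "((F \<circ> real_of_ereal) \<longlongrightarrow> 0) (at_left \<infinity>)"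
      using T by (simp add: ereal_tendsto_simps1)
  qed
  then show ?thesis by (simp add: interval_lebesgue_integral_def set_lebesgue_integral_def)
qed

lemma integrable_cauchy: "integrable lborel (\<lambda>x::real. 1 / (1 + x\<^sup>2))"
proof -
  have "set_integrable lborel (einterval (-\<infinity>) \<infinity>) (\<lambda>x::real. 1 / (1 + x\<^sup>2))"
  proof (rule interval_integral_FTC_nonneg(1)[where F=arctan and A="-pi/2" and B="pi/2"])
    show "-\<infinity> < (\<infinity>::ereal)" by simp
    show "DERIV arctan x :> 1 / (1 + x\<^sup>2)" for x
      using DERIV_arctan[of x] by (simp add: divide_inverse)
    show "isCont (\<lambda>x::real. 1 / (1 + x\<^sup>2)) x" for x
      by (intro continuous_intros) (smt (verit) zero_le_power2)
    show "AE x in lborel. - \<infinity> < ereal x \<longrightarrow> ereal x < \<infinity> \<longrightarrow> 0 \<le> 1 / (1 + x\<^sup>2)"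
      by (intro AE_I2) simp
    show "((arctan \<circ> real_of_ereal) \<longlongrightarrow> -pi/2) (at_right (-\<infinity>))"
      by (simp add: ereal_tendsto_simps1 tendsto_arctan_at_bot)
    show "((arctan \<circ> real_of_ereal) \<longlongrightarrow> pi/2) (at_left \<infinity>)"
      by (simp add: ereal_tendsto_simps1 tendsto_arctan_at_top)
  qed
  then show ?thesis by (simp add: set_integrable_def)
qed


definition pbound :: "nat \<Rightarrow> (real \<Rightarrow> real) \<Rightarrow> bool" where
  "pbound n \<phi> \<longleftrightarrow> (\<exists>B. \<forall>x. \<bar>\<phi> x\<bar> \<le> B * (1 + \<bar>x\<bar>) ^ n)"

lemma pboundE:
  assumes "pbound n \<phi>"
  obtains B where "B \<ge> 0" "\<And>x. \<bar>\<phi> x\<bar> \<le> B * (1 + \<bar>x\<bar>) ^ n"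
proof -
  obtain B where B: "\<And>x. \<bar>\<phi> x\<bar> \<le> B * (1 + \<bar>x\<bar>) ^ n" using assms unfolding pbound_def by blast
  have "\<bar>\<phi> 0\<bar> \<le> B" using B[of 0] by simp
  then have "B \<ge> 0" using abs_ge_zero[of "\<phi> 0"] by linarith
  with B that show ?thesis by blast
qed

lemma pb_mono:
  assumes "pbound m \<phi>" "m \<le> n" shows "pbound n \<phi>"
proof -
  obtain B where B: "B \<ge> 0" "\<And>x. \<bar>\<phi> x\<bar> \<le> B * (1 + \<bar>x\<bar>) ^ m" using pboundE[OF assms(1)] by blast
  have "\<bar>\<phi> x\<bar> \<le> B * (1 + \<bar>x\<bar>) ^ n" for x
  proof -
    have "(1 + \<bar>x\<bar>) ^ m \<le> (1 + \<bar>x\<bar>) ^ n" using assms(2) by (intro power_increasing) auto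
    then have "B * (1 + \<bar>x\<bar>) ^ m \<le> B * (1 + \<bar>x\<bar>) ^ n" using B(1) by (rule mult_left_mono)
    then show ?thesis using B(2)[of x] by linarith
  qed
  then show ?thesis unfolding pbound_def by blast
qed

lemma pb_mult:
  assumes "pbound m \<phi>" "pbound n \<psi>" shows "pbound (m + n) (\<lambda>x. \<phi> x * \<psi> x)"
proof -
  obtain B where B: "B \<ge> 0" "\<And>x. \<bar>\<phi> x\<bar> \<le> B * (1 + \<bar>x\<bar>) ^ m" using pboundE[OF assms(1)] by blast
  obtain C where C: "C \<ge> 0" "\<And>x. \<bar>\<psi> x\<bar> \<le> C * (1 + \<bar>x\<bar>) ^ n" using pboundE[OF assms(2)] by blast
  have "\<bar>\<phi> x * \<psi> x\<bar> \<le> (B * C) * (1 + \<bar>x\<bar>) ^ (m + n)" for x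
  proof -
    have "\<bar>\<phi> x * \<psi> x\<bar> = \<bar>\<phi> x\<bar> * \<bar>\<psi> x\<bar>" by (simp add: abs_mult)
    also have "\<dots> \<le> (B * (1 + \<bar>x\<bar>) ^ m) * (C * (1 + \<bar>x\<bar>) ^ n)"
      by (intro mult_mono B C) (use B(1) in auto)
    also have "\<dots> = (B * C) * (1 + \<bar>x\<bar>) ^ (m + n)" by (simp add: power_add)
    finally show ?thesis .
  qed
  then show ?thesis unfolding pbound_def by blast
qed

lemma pb_const: "pbound 0 (\<lambda>x. c)"
  unfolding pbound_def by (rule exI[of _ "\<bar>c\<bar>"]) simp

lemma pb_lin: "pbound 1 (\<lambda>x. x - \<mu>)"
proof -
  have "\<bar>x - \<mu>\<bar> \<le> (1 + \<bar>\<mu>\<bar>) * (1 + \<bar>x\<bar>) ^ 1" for x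
  proof -
    have "\<bar>x - \<mu>\<bar> \<le> \<bar>x\<bar> + \<bar>\<mu>\<bar>" by linarith
    also have "\<dots> \<le> (1 + \<bar>\<mu>\<bar>) * (1 + \<bar>x\<bar>)"
      by (simp add: algebra_simps)
    finally show ?thesis by simp
  qed
  then show ?thesis unfolding pbound_def by blast
qed

lemma pb_deriv:
  assumes D: "\<And>x. DERIV \<phi> x :> \<psi> x" and P: "pbound n \<psi>"
  shows "pbound (Suc n) \<phi>"
proof -
  obtain B where B: "B \<ge> 0" "\<And>x. \<bar>\<psi> x\<bar> \<le> B * (1 + \<bar>x\<bar>) ^ n" using pboundE[OF P] by blast
  have main: "\<bar>\<phi> x\<bar> \<le> (\<bar>\<phi> 0\<bar> + B) * (1 + \<bar>x\<bar>) ^ Suc n" for x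
  proof -
    have "\<exists>z. \<bar>z\<bar> \<le> \<bar>x\<bar> \<and> \<phi> x - \<phi> 0 = x * \<psi> z"
    proof (cases x "0::real" rule: linorder_cases)
      case less
      from MVT2[OF less, of \<phi> \<psi>] D obtain z where "z > x" "z < 0" "\<phi> 0 - \<phi> x = (0 - x) * \<psi> z" by blast
      then show ?thesis by (intro exI[of _ z]) (auto simp: algebra_simps)
    next
      case equal then show ?thesis by auto
    next
      case greater
      from MVT2[OF greater, of \<phi> \<psi>] D obtain z where "z > 0" "z < x" "\<phi> x - \<phi> 0 = (x - 0) * \<psi> z" by blast
      then show ?thesis by (intro exI[of _ z]) (auto simp: algebra_simps)
    qed
    then obtain z where z: "\<bar>z\<bar> \<le> \<bar>x\<bar>" "\<phi> x - \<phi> 0 = x * \<psi> z" by blast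
    have pz: "\<bar>\<psi> z\<bar> \<le> B * (1 + \<bar>x\<bar>) ^ n"
    proof -
      have "(1 + \<bar>z\<bar>) ^ n \<le> (1 + \<bar>x\<bar>) ^ n" using z(1) by (intro power_mono) auto
      then have "B * (1 + \<bar>z\<bar>) ^ n \<le> B * (1 + \<bar>x\<bar>) ^ n" using B(1) by (rule mult_left_mono)
      then show ?thesis using B(2)[of z] by linarith
    qed
    have "\<phi> x = \<phi> 0 + x * \<psi> z" using z(2) by simp
    then have "\<bar>\<phi> x\<bar> \<le> \<bar>\<phi> 0\<bar> + \<bar>x * \<psi> z\<bar>" by (metis abs_triangle_ineq)
    then have "\<bar>\<phi> x\<bar> \<le> \<bar>\<phi> 0\<bar> + \<bar>x\<bar> * \<bar>\<psi> z\<bar>" by (simp add: abs_mult)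
    also have "\<dots> \<le> \<bar>\<phi> 0\<bar> + (1 + \<bar>x\<bar>) * (B * (1 + \<bar>x\<bar>) ^ n)"
      by (intro add_left_mono mult_mono pz) auto
    also have "\<dots> \<le> \<bar>\<phi> 0\<bar> * (1 + \<bar>x\<bar>) ^ Suc n + B * (1 + \<bar>x\<bar>) ^ Suc n"
    proof -
      have "1 \<le> (1 + \<bar>x\<bar>) ^ Suc n" by (intro one_le_power) auto
      then have "\<bar>\<phi> 0\<bar> \<le> \<bar>\<phi> 0\<bar> * (1 + \<bar>x\<bar>) ^ Suc n"
        by (metis abs_ge_zero mult.right_neutral mult_left_mono)
      then show ?thesis by (simp add: algebra_simps)
    qed
    finally show ?thesis by (simp add: algebra_simps)
  qed
  then show ?thesis unfolding pbound_def by blast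
qed


lemma growth:
  fixes G :: "real \<Rightarrow> real" and \<nu> L :: real
  assumes mono: "mono_on {\<nu>..} G" and lim: "((\<lambda>t. G (t * 2) / G t) \<longlongrightarrow> L) at_top" and L: "L > 1"
  shows "\<exists>a \<gamma> T. a > 0 \<and> \<gamma> > 0 \<and> T > 0 \<and> (\<forall>t\<ge>T. G t \<ge> a * t powr \<gamma>)"
proof -
  define c where "c = (1 + L) / 2"
  have c1: "c > 1" and cL: "c < L" using L by (auto simp: c_def)
  have "eventually (\<lambda>t. G (t * 2) / G t > c) at_top"
    using lim cL by (rule order_tendstoD)
  then obtain T0 where T0: "\<And>t. t \<ge> T0 \<Longrightarrow> G (t * 2) / G t > c"
    by (auto simp: eventually_at_top_linorder)
  define T1 where "T1 = max (max T0 \<nu>) 1"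
  have T1: "T1 \<ge> T0" "T1 \<ge> \<nu>" "T1 \<ge> 1" by (auto simp: T1_def)
  have monoG: "G s \<le> G t" if "T1 \<le> s" "s \<le> t" for s t
    using mono that T1 by (auto simp: mono_on_def)
  have pos: "G t > 0" if "t \<ge> T1" for t
  proof (rule ccontr)
    assume "\<not> G t > 0"
    then consider "G t = 0" | "G t < 0" by linarith
    then show False
    proof cases
      case 1
      then show False using T0[of t] that T1 c1 by auto
    next
      case 2
      have "G t \<le> G (t * 2)" using monoG[of t "t*2"] that T1 by auto
      then have "G (t * 2) / G t \<le> 1" using 2 by (simp add: divide_le_eq_1)
      then show False using T0[of t] that T1 c1 by auto
    qed
  qed
  have grow: "G (t * 2) > c * G t" if "t \<ge> T1" for t
    using T0[of t] pos[OF that] that T1 by (simp add: pos_less_divide_eq)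
  define \<gamma> where "\<gamma> = log 2 c"
  have \<gamma>: "\<gamma> > 0" using c1 by (simp add: \<gamma>_def)
  have c_eq: "2 powr \<gamma> = c" using c1 by (simp add: \<gamma>_def)
  define a where "a = G T1 / (2 * T1) powr \<gamma>"
  have a: "a > 0" using pos[of T1] T1 by (simp add: a_def)
  have base: "G t \<ge> a * t powr \<gamma>" if "T1 \<le> t" "t \<le> 2 * T1" for t
  proof -
    have "t powr \<gamma> \<le> (2 * T1) powr \<gamma>" using that T1 \<gamma> by (intro powr_mono2) auto
    then have "a * t powr \<gamma> \<le> a * (2 * T1) powr \<gamma>" using a by (intro mult_left_mono) auto
    also have "\<dots> = G T1" using T1 by (simp add: a_def)
    also have "\<dots> \<le> G t" using monoG[of T1 t] that by auto
    finally show ?thesis .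
  qed
  have ind: "\<forall>t. T1 \<le> t \<and> t \<le> 2 ^ (n + 1) * T1 \<longrightarrow> G t \<ge> a * t powr \<gamma>" for n
  proof (induction n)
    case 0
    then show ?case using base by auto
  next
    case (Suc n)
    show ?case
    proof (intro allI impI)
      fix t assume t: "T1 \<le> t \<and> t \<le> 2 ^ (Suc n + 1) * T1"
      show "G t \<ge> a * t powr \<gamma>"
      proof (cases "t \<le> 2 * T1")
        case True
        then show ?thesis using base t by auto
      next
        case False
        have h1: "T1 \<le> t / 2" using False by auto
        have h2: "t / 2 \<le> 2 ^ (n + 1) * T1" using t by auto
        have IH: "G (t / 2) \<ge> a * (t / 2) powr \<gamma>" using Suc.IH h1 h2 by blast
        have "a * t powr \<gamma> = c * (a * (t / 2) powr \<gamma>)"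
        proof -
          have "t powr \<gamma> = 2 powr \<gamma> * (t / 2) powr \<gamma>"
            using h1 T1 by (subst powr_mult[symmetric]) auto
          then show ?thesis using c_eq by simp
        qed
        also have "\<dots> \<le> c * G (t / 2)" using IH c1 by (intro mult_left_mono) auto
        also have "\<dots> < G (t / 2 * 2)" using grow[OF h1] by simp
        finally show ?thesis by simp
      qed
    qed
  qed
  have "\<forall>t\<ge>T1. G t \<ge> a * t powr \<gamma>"
  proof (intro allI impI)
    fix t assume t: "t \<ge> T1"
    obtain n where n: "t / T1 < 2 ^ n" using real_arch_pow[of 2 "t / T1"] by auto
    have "t < 2 ^ n * T1" using n T1 by (simp add: divide_less_eq)
    also have "\<dots> \<le> 2 ^ (n + 1) * T1" using T1 by (intro mult_right_mono) auto
    finally show "G t \<ge> a * t powr \<gamma>" using ind[of n] t by auto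
  qed
  then show ?thesis using a \<gamma> T1 by (intro exI[of _ a] exI[of _ \<gamma>] exI[of _ T1]) auto
qed


lemma ev_ln: 
  fixes a \<gamma> \<beta> :: real
  assumes "a > 0" "\<gamma> > 0" "\<beta> > 0"
  shows "eventually (\<lambda>t. 10 * ln (1 + t) \<le> \<beta> * (a * t powr \<gamma>)) at_top"
  using assms by real_asymp

lemma tail_bound:
  fixes G :: "real \<Rightarrow> real" and \<nu> L \<beta> :: real
  assumes mono: "mono_on {\<nu>..} G" and lim: "((\<lambda>t. G (t * 2) / G t) \<longlongrightarrow> L) at_top" and L: "L > 1"
    and \<beta>: "\<beta> > 0"
  shows "\<exists>T. \<forall>t\<ge>T. 10 * ln (1 + t) \<le> \<beta> * G t"
proof -
  obtain a \<gamma> T where aT: "a > 0" "\<gamma> > 0" "T > 0" "\<And>t. t \<ge> T \<Longrightarrow> G t \<ge> a * t powr \<gamma>"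
    using growth[OF mono lim L] by blast
  have "eventually (\<lambda>t. 10 * ln (1 + t) \<le> \<beta> * (a * t powr \<gamma>)) at_top"
    using aT \<beta> by (intro ev_ln)
  moreover have "eventually (\<lambda>t. t \<ge> T) at_top" by simp
  ultimately have "eventually (\<lambda>t. 10 * ln (1 + t) \<le> \<beta> * G t) at_top"
  proof eventually_elim
    case (elim t)
    then have "\<beta> * (a * t powr \<gamma>) \<le> \<beta> * G t" using aT(4)[of t] \<beta> by (intro mult_left_mono) auto
    then show ?case using elim by linarith
  qed
  then show ?thesis by (auto simp: eventually_at_top_linorder)
qed

lemma decay:
  fixes f :: "real \<Rightarrow> real" and \<mu> \<beta> :: real
  assumes pos: "\<And>x. f x > 0"
    and unimodal: "mono_on {..\<mu>} f" "antimono_on {\<mu>..} f"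
    and regvar: "\<exists>\<alpha>>0. \<forall>x>0.
        ((\<lambda>t. (- ln (f (t * x))) / (- ln (f t))) \<longlongrightarrow> x powr \<alpha>) at_infinity"
    and beta: "\<beta> > 0"
  shows "\<exists>T. \<forall>x. \<bar>x\<bar> \<ge> T \<longrightarrow> (1 + \<bar>x\<bar>) ^ 10 * f x powr \<beta> \<le> 1"
proof -
  define H where "H = (\<lambda>x. - ln (f x))"
  obtain \<alpha> where \<alpha>: "\<alpha> > 0" and lim: "((\<lambda>t. H (t * 2) / H t) \<longlongrightarrow> 2 powr \<alpha>) at_infinity"
    using regvar unfolding H_def by force
  have L: "2 powr \<alpha> > (1::real)" using \<alpha> by simp
  have limR: "((\<lambda>t. H (t * 2) / H t) \<longlongrightarrow> 2 powr \<alpha>) at_top"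
    using lim at_top_le_at_infinity by (rule tendsto_mono[rotated])
  have limB: "((\<lambda>t. H (t * 2) / H t) \<longlongrightarrow> 2 powr \<alpha>) at_bot"
    using lim at_bot_le_at_infinity by (rule tendsto_mono[rotated])
  have limL: "((\<lambda>t. H (- t * 2) / H (- t)) \<longlongrightarrow> 2 powr \<alpha>) at_top"
    using filterlim_compose[OF limB filterlim_uminus_at_bot_at_top] by simp
  have monoR: "mono_on {\<mu>..} H"
    using unimodal(2) pos unfolding H_def mono_on_def monotone_on_def by auto
  have monoL: "mono_on {-\<mu>..} (\<lambda>s. H (- s))"
    using unimodal(1) pos unfolding H_def mono_on_def monotone_on_def by auto
  obtain TR where TR: "\<And>t. t \<ge> TR \<Longrightarrow> 10 * ln (1 + t) \<le> \<beta> * H t"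
    using tail_bound[OF monoR limR L beta] by blast
  obtain TL where TL: "\<And>t. t \<ge> TL \<Longrightarrow> 10 * ln (1 + t) \<le> \<beta> * H (- t)"
    using tail_bound[OF monoL _ L beta] limL by auto
  have "(1 + \<bar>x\<bar>) ^ 10 * f x powr \<beta> \<le> 1" if x: "\<bar>x\<bar> \<ge> max TR TL" for x
  proof -
    have key: "10 * ln (1 + \<bar>x\<bar>) \<le> \<beta> * H x"
    proof (cases "x \<ge> 0")
      case True then show ?thesis using TR[of x] x by auto
    next
      case False then show ?thesis using TL[of "-x"] x by auto
    qed
    have "(1 + \<bar>x\<bar>) ^ 10 = exp (10 * ln (1 + \<bar>x\<bar>))"
      by (subst exp_of_nat_mult[of 10, simplified]) (simp add: add_pos_nonneg)
    moreover have "f x powr \<beta> = exp (- (\<beta> * H x))"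
      using pos[of x] by (simp add: powr_def H_def)
    ultimately have "(1 + \<bar>x\<bar>) ^ 10 * f x powr \<beta> = exp (10 * ln (1 + \<bar>x\<bar>) - \<beta> * H x)"
      by (simp add: exp_diff exp_minus divide_inverse)
    also have "\<dots> \<le> 1" using key by simp
    finally show ?thesis .
  qed
  then show ?thesis by blast
qed


lemma pb_int:
  fixes g \<phi> :: "real \<Rightarrow> real" and T :: real
  assumes gc: "\<And>x. isCont g x" and g0: "\<And>x. g x \<ge> 0"
    and dec: "\<And>x. \<bar>x\<bar> \<ge> T \<Longrightarrow> (1 + \<bar>x\<bar>) ^ 10 * g x \<le> 1"
    and pc: "\<And>x. isCont \<phi> x" and pb: "pbound 8 \<phi>"
  shows "integrable lborel (\<lambda>x. \<phi> x * g x)"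
    "((\<lambda>x. \<phi> x * g x) \<longlongrightarrow> 0) at_top" "((\<lambda>x. \<phi> x * g x) \<longlongrightarrow> 0) at_bot"
proof -
  obtain B where B: "B \<ge> 0" "\<And>x. \<bar>\<phi> x\<bar> \<le> B * (1 + \<bar>x\<bar>) ^ 8" using pboundE[OF pb] by blast
  have cont: "continuous_on A (\<lambda>x. \<phi> x * g x)" for A
    using pc gc by (intro continuous_at_imp_continuous_on ballI continuous_intros) auto
  obtain K where K: "K \<ge> 0" "\<And>x. x \<in> {-\<bar>T\<bar>..\<bar>T\<bar>} \<Longrightarrow> norm (\<phi> x * g x) \<le> K"
    using continuous_on_compact_bound[OF compact_Icc cont] by blast
  define D where "D = K * (1 + T\<^sup>2) + B"
  have bound: "\<bar>\<phi> x * g x\<bar> \<le> D * (1 / (1 + x\<^sup>2))" for x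
  proof (cases "\<bar>x\<bar> \<le> \<bar>T\<bar>")
    case True
    have k: "\<bar>\<phi> x * g x\<bar> \<le> K" using K(2)[of x] True by (auto simp: abs_le_iff)
    have "x\<^sup>2 \<le> T\<^sup>2" using True by (simp add: abs_le_square_iff)
    then have "1 \<le> (1 + T\<^sup>2) / (1 + x\<^sup>2)" by (simp add: add_pos_nonneg)
    then have "K \<le> K * ((1 + T\<^sup>2) / (1 + x\<^sup>2))" using K(1) by (metis mult.right_neutral mult_left_mono)
    also have "\<dots> \<le> D * (1 / (1 + x\<^sup>2))"
      using B(1) K(1) by (simp add: D_def divide_simps add_pos_nonneg)
    finally show ?thesis using k by linarith
  next
    case False
    have p: "1 + \<bar>x\<bar> > 0" by (simp add: add_pos_nonneg)
    have "\<bar>\<phi> x * g x\<bar> = \<bar>\<phi> x\<bar> * g x" using g0[of x] by (simp add: abs_mult)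
    also have "\<dots> \<le> B * (1 + \<bar>x\<bar>) ^ 8 * g x" using B(2)[of x] g0[of x] by (rule mult_right_mono)
    also have "\<dots> = B * ((1 + \<bar>x\<bar>) ^ 10 * g x) / (1 + \<bar>x\<bar>)\<^sup>2"
      using p by (simp add: field_simps)
    also have "\<dots> \<le> B * 1 / (1 + \<bar>x\<bar>)\<^sup>2"
      using dec[of x] False B(1) p by (intro divide_right_mono mult_left_mono) auto
    also have "\<dots> \<le> B / (1 + x\<^sup>2)"
    proof -
      have "1 + x\<^sup>2 \<le> (1 + \<bar>x\<bar>)\<^sup>2" by (simp add: power2_eq_square algebra_simps)
      then show ?thesis using B(1) by (simp add: frac_le add_pos_nonneg)
    qed
    also have "\<dots> \<le> D * (1 / (1 + x\<^sup>2))"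
      using B(1) K(1) by (simp add: D_def divide_simps add_pos_nonneg)
    finally show ?thesis .
  qed
  show "integrable lborel (\<lambda>x. \<phi> x * g x)"
  proof (rule Bochner_Integration.integrable_bound)
    show "integrable lborel (\<lambda>x. D * (1 / (1 + x\<^sup>2)))"
      using integrable_cauchy by (rule integrable_mult_right)
    show "(\<lambda>x. \<phi> x * g x) \<in> borel_measurable lborel"
      using cont[of UNIV] by (simp add: borel_measurable_continuous_onI)
    show "AE x in lborel. norm (\<phi> x * g x) \<le> norm (D * (1 / (1 + x\<^sup>2)))"
    proof (intro AE_I2)
      fix x
      have "\<bar>D * (1 / (1 + x\<^sup>2))\<bar> \<ge> D * (1 / (1 + x\<^sup>2))" by (rule abs_ge_self)
      then show "norm (\<phi> x * g x) \<le> norm (D * (1 / (1 + x\<^sup>2)))"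
        using bound[of x] unfolding real_norm_def by linarith
    qed
  qed
  have l1: "((\<lambda>x. D * (1 / (1 + x\<^sup>2))) \<longlongrightarrow> 0) at_top" by real_asymp
  have l2: "((\<lambda>x. D * (1 / (1 + x\<^sup>2))) \<longlongrightarrow> 0) at_bot" by real_asymp
  show "((\<lambda>x. \<phi> x * g x) \<longlongrightarrow> 0) at_top"
    using bound by (intro Lim_null_comparison[OF _ l1] always_eventually) auto
  show "((\<lambda>x. \<phi> x * g x) \<longlongrightarrow> 0) at_bot"
    using bound by (intro Lim_null_comparison[OF _ l2] always_eventually) auto
qed


lemma deriv_ext: "(\<And>x. DERIV u x :> u' x) \<Longrightarrow> deriv u = u'"
  by (rule ext) (rule DERIV_imp_deriv)

lemma h_smooth:
  fixes f :: "real \<Rightarrow> real"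
  assumes pos: "\<And>x. f x > 0" and smooth: "C4 f"
  defines "h \<equiv> (\<lambda>x. ln (f x))"
  shows "\<And>x. DERIV h x :> deriv h x" "\<And>x. DERIV (deriv h) x :> deriv (deriv h) x"
    "\<And>x. DERIV (deriv (deriv h)) x :> deriv (deriv (deriv h)) x"
    "\<And>x. DERIV (deriv (deriv (deriv h))) x :> deriv (deriv (deriv (deriv h))) x"
proof -
  define f1 where "f1 = deriv f"
  define f2 where "f2 = deriv f1"
  define f3 where "f3 = deriv f2"
  have d0: "f differentiable (at x)" for x using smooth[unfolded C4_def] by (metis funpow_0 zero_less_numeral)
  have d1: "f1 differentiable (at x)" for x using smooth[unfolded C4_def, THEN conjunct1, rule_format, of 1 x]
    by (simp add: f1_def)
  have d2: "f2 differentiable (at x)" for x using smooth[unfolded C4_def, THEN conjunct1, rule_format, of 2 x]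
    by (simp add: f1_def f2_def numeral_eq_Suc)
  have d3: "f3 differentiable (at x)" for x using smooth[unfolded C4_def, THEN conjunct1, rule_format, of 3 x]
    by (simp add: f1_def f2_def f3_def numeral_eq_Suc)
  have D0: "DERIV f x :> f1 x" for x using d0 by (simp add: f1_def DERIV_deriv_iff_real_differentiable)
  have D1: "DERIV f1 x :> f2 x" for x using d1 by (simp add: f2_def DERIV_deriv_iff_real_differentiable)
  have D2: "DERIV f2 x :> f3 x" for x using d2 by (simp add: f3_def DERIV_deriv_iff_real_differentiable)
  have fne: "f x \<noteq> 0" for x using pos[of x] by simp
  define E1 where "E1 = (\<lambda>x. f1 x / f x)"
  define E2 where "E2 = (\<lambda>x. (f2 x * f x - f1 x * f1 x) / (f x)\<^sup>2)"
  define E3 where "E3 = (\<lambda>x. ((f3 x * f x + f2 x * f1 x - 2 * f1 x * f2 x) * (f x)\<^sup>2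
       - (f2 x * f x - f1 x * f1 x) * (2 * f x * f1 x)) / ((f x)\<^sup>2)\<^sup>2)"
  have DE0: "DERIV h x :> E1 x" for x
    unfolding h_def E1_def using fne[of x] pos[of x]
    by (auto intro!: derivative_eq_intros D0 simp: field_simps)
  have DE1: "DERIV E1 x :> E2 x" for x
    unfolding E1_def E2_def using fne[of x]
    by (auto intro!: derivative_eq_intros D0 D1 simp: field_simps power2_eq_square)
  have DE2: "DERIV E2 x :> E3 x" for x
    unfolding E2_def E3_def using fne[of x]
    by (auto intro!: derivative_eq_intros D0 D1 D2 simp: field_simps power2_eq_square)
  have e1: "deriv h = E1" using DE0 by (rule deriv_ext)
  have e2: "deriv E1 = E2" using DE1 by (rule deriv_ext)
  have e3: "deriv E2 = E3" using DE2 by (rule deriv_ext)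
  have dE3: "E3 differentiable (at x)" for x
    unfolding E3_def using d0 d1 d2 d3 fne by simp
  show "\<And>x. DERIV h x :> deriv h x" using DE0 e1 by simp
  show "\<And>x. DERIV (deriv h) x :> deriv (deriv h) x" using DE1 e1 e2 by simp
  show "\<And>x. DERIV (deriv (deriv h)) x :> deriv (deriv (deriv h)) x" using DE2 e1 e2 e3 by simp
  show "\<And>x. DERIV (deriv (deriv (deriv h))) x :> deriv (deriv (deriv (deriv h))) x"
    using dE3 e1 e2 e3 by (simp add: DERIV_deriv_iff_real_differentiable)
qed


lemma cov_lin:
  fixes g u v :: "real \<Rightarrow> real"
  assumes "integrable lborel g" "integrable lborel (\<lambda>x. u x * g x)" "integrable lborel (\<lambda>x. v x * g x)"
    "integrable lborel (\<lambda>x. u x * v x * g x)"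
  shows "(LINT x|lborel. (u x - a) * (v x - b) * g x) =
    (LINT x|lborel. u x * v x * g x) - b * (LINT x|lborel. u x * g x) - a * (LINT x|lborel. v x * g x)
      + a * b * (LINT x|lborel. g x)"
proof -
  have "(LINT x|lborel. (u x - a) * (v x - b) * g x) =
      (LINT x|lborel. u x * v x * g x - b * (u x * g x) - a * (v x * g x) + a * b * g x)"
    by (intro Bochner_Integration.integral_cong refl) (simp add: algebra_simps)
  also have "\<dots> = (LINT x|lborel. u x * v x * g x - b * (u x * g x) - a * (v x * g x)) + (LINT x|lborel. a * b * g x)"
    using assms by (intro Bochner_Integration.integral_add Bochner_Integration.integrable_diff Bochner_Integration.integrable_mult_right)
  also have "(LINT x|lborel. u x * v x * g x - b * (u x * g x) - a * (v x * g x)) =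
      (LINT x|lborel. u x * v x * g x - b * (u x * g x)) - (LINT x|lborel. a * (v x * g x))"
    using assms by (intro Bochner_Integration.integral_diff Bochner_Integration.integrable_diff Bochner_Integration.integrable_mult_right)
  also have "(LINT x|lborel. u x * v x * g x - b * (u x * g x)) =
      (LINT x|lborel. u x * v x * g x) - (LINT x|lborel. b * (u x * g x))"
    using assms by (intro Bochner_Integration.integral_diff Bochner_Integration.integrable_diff Bochner_Integration.integrable_mult_right)
  finally show ?thesis by simp
qed

theorem proposition4:
  fixes f :: "real \<Rightarrow> real" and \<mu> M \<beta> l :: real
  assumes pos: "\<And>x. f x > 0"
    and smooth: "C4 f"
    and unimodal: "mono_on {..\<mu>} f" "antimono_on {\<mu>..} f"
    and regvar: "\<exists>\<alpha>>0. \<forall>x>0.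
        ((\<lambda>t. (- ln (f (t * x))) / (- ln (f t))) \<longlongrightarrow> x powr \<alpha>) at_infinity"
    and Mpos: "M > 0"
    and bound4: "\<And>x. \<bar>(deriv ^^ 4) (\<lambda>y. ln (f y)) x\<bar> < M"
    and beta: "\<beta> > 0" and ell: "l > 0"
  shows "l\<^sup>2 * (Vfun f \<mu> \<beta> / 2 - Ifun f \<beta> + Rfun f \<mu> \<beta> / (4 * \<beta>))
       = - l\<^sup>2 * Varbeta f \<beta> (\<lambda>x. hfun f x - kfun f \<mu> x / 2)"
proof -
  define h where "h = hfun f"
  have h_eq: "h = (\<lambda>x. ln (f x))" by (simp add: h_def hfun_def)
  define h1 where "h1 = deriv h"
  define h2 where "h2 = deriv h1"
  define h3 where "h3 = deriv h2"
  have D0: "\<And>x. DERIV h x :> h1 x" and D1: "\<And>x. DERIV h1 x :> h2 x"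
    and D2: "\<And>x. DERIV h2 x :> h3 x" and D3: "\<And>x. DERIV h3 x :> deriv h3 x"
    using h_smooth[OF pos smooth] unfolding h1_def h2_def h3_def h_eq by auto
  have b4: "\<bar>deriv h3 x\<bar> \<le> M * (1 + \<bar>x\<bar>) ^ 0" for x
    using bound4[of x] by (simp add: h3_def h2_def h1_def h_eq numeral_eq_Suc)
  have P0: "pbound 0 (deriv h3)" unfolding pbound_def using b4 by blast
  have P1: "pbound 1 h3" using pb_deriv[OF D3 P0] by simp
  have P2: "pbound 2 h2" using pb_deriv[OF D2 P1] by (simp add: numeral_eq_Suc)
  have P3: "pbound 3 h1" using pb_deriv[OF D1 P2] by (simp add: numeral_eq_Suc)
  have P4: "pbound 4 h" using pb_deriv[OF D0 P3] by (simp add: numeral_eq_Suc)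
  have ch: "isCont h x" for x using D0 by (rule DERIV_isCont)
  have ch1: "isCont h1 x" for x using D1 by (rule DERIV_isCont)
  have ch2: "isCont h2 x" for x using D2 by (rule DERIV_isCont)
  define g where "g = (\<lambda>x. f x powr \<beta>)"
  have g_exp: "g = (\<lambda>x. exp (\<beta> * h x))" using pos by (simp add: fun_eq_iff g_def h_eq powr_def less_imp_neq[OF pos, symmetric])
  have g0: "g x \<ge> 0" for x by (simp add: g_exp)
  have Dg: "DERIV g x :> \<beta> * h1 x * g x" for x
    unfolding g_exp by (auto intro!: derivative_eq_intros D0)
  have cg: "isCont g x" for x using Dg by (rule DERIV_isCont)
  obtain T where T: "\<And>x. \<bar>x\<bar> \<ge> T \<Longrightarrow> (1 + \<bar>x\<bar>) ^ 10 * g x \<le> 1"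
    using decay[OF pos unimodal regvar beta] by (auto simp: g_def)
  have PI: "integrable lborel (\<lambda>x. \<phi> x * g x) \<and> ((\<lambda>x. \<phi> x * g x) \<longlongrightarrow> 0) at_top
      \<and> ((\<lambda>x. \<phi> x * g x) \<longlongrightarrow> 0) at_bot" if "\<And>x. isCont \<phi> x" "pbound 8 \<phi>" for \<phi>
    using pb_int[OF cg g0 T that] by blast
  define k' where "k' = (\<lambda>x. (x - \<mu>) * h1 x)"
  define r' where "r' = (\<lambda>x. (x - \<mu>)\<^sup>2 * h2 x)"
  have kfun_eq: "kfun f \<mu> = k'" by (simp add: fun_eq_iff kfun_def k'_def h1_def h_def)
  have rfun_eq: "rfun f \<mu> = r'" by (simp add: fun_eq_iff rfun_def r'_def h2_def h1_def h_def)
  have ck: "isCont k' x" for x unfolding k'_def by (intro continuous_intros ch1)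
  have cr: "isCont r' x" for x unfolding r'_def by (intro continuous_intros ch2)
  have pk: "pbound 4 k'" using pb_mult[OF pb_lin[of \<mu>] P3] by (simp add: k'_def)
  have pr: "pbound 4 r'" using pb_mult[OF pb_mult[OF pb_lin[of \<mu>] pb_lin[of \<mu>]] P2] by (simp add: r'_def power2_eq_square numeral_eq_Suc)
  have p8: "pbound 8 \<phi>" if "pbound m \<phi>" "m \<le> 8" for m \<phi> using pb_mono that by blast
  have Ig: "integrable lborel g" using PI[of "\<lambda>x. 1"] p8[OF pb_const] by auto
  have Ih: "integrable lborel (\<lambda>x. h x * g x)" using PI[of h] p8[OF P4] ch by auto
  have Ik: "integrable lborel (\<lambda>x. k' x * g x)" using PI[of k'] p8[OF pk] ck by auto
  have Ir: "integrable lborel (\<lambda>x. r' x * g x)" using PI[of r'] p8[OF pr] cr by auto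
  have Ihh: "integrable lborel (\<lambda>x. h x * h x * g x)"
    using PI[of "\<lambda>x. h x * h x"] pb_mult[OF P4 P4] ch by (auto intro!: continuous_intros)
  have Ihk: "integrable lborel (\<lambda>x. h x * k' x * g x)"
    using PI[of "\<lambda>x. h x * k' x"] pb_mult[OF P4 pk] ch ck by (auto intro!: continuous_intros)
  have Ikk: "integrable lborel (\<lambda>x. k' x * k' x * g x)"
    using PI[of "\<lambda>x. k' x * k' x"] pb_mult[OF pk pk] ck by (auto intro!: continuous_intros)
  have L1: "((\<lambda>x. (x - \<mu>) * g x) \<longlongrightarrow> 0) at_top \<and> ((\<lambda>x. (x - \<mu>) * g x) \<longlongrightarrow> 0) at_bot"
    using PI[of "\<lambda>x. x - \<mu>"] p8[OF pb_lin[of \<mu>]] by (auto intro!: continuous_intros)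
  have L2: "((\<lambda>x. h x * (x - \<mu>) * g x) \<longlongrightarrow> 0) at_top \<and> ((\<lambda>x. h x * (x - \<mu>) * g x) \<longlongrightarrow> 0) at_bot"
    using PI[of "\<lambda>x. h x * (x - \<mu>)"] p8[OF pb_mult[OF P4 pb_lin[of \<mu>]]] ch by (auto intro!: continuous_intros)
  have L3: "((\<lambda>x. (x - \<mu>)\<^sup>2 * h1 x * g x) \<longlongrightarrow> 0) at_top \<and> ((\<lambda>x. (x - \<mu>)\<^sup>2 * h1 x * g x) \<longlongrightarrow> 0) at_bot"
    using PI[of "\<lambda>x. (x - \<mu>)\<^sup>2 * h1 x"] p8[OF pb_mult[OF pb_mult[OF pb_lin[of \<mu>] pb_lin[of \<mu>]] P3]] ch1
    by (auto intro!: continuous_intros simp: power2_eq_square)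
  define Z where "Z = (LINT x|lborel. g x)"
  define A where "A = (LINT x|lborel. h x * g x)"
  define K where "K = (LINT x|lborel. k' x * g x)"
  define RR where "RR = (LINT x|lborel. r' x * g x)"
  define HH where "HH = (LINT x|lborel. h x * h x * g x)"
  define HK where "HK = (LINT x|lborel. h x * k' x * g x)"
  define KK where "KK = (LINT x|lborel. k' x * k' x * g x)"
  have F1: "(LINT x|lborel. g x + \<beta> * (k' x * g x)) = 0"
  proof (rule FTC_zero[where F="\<lambda>x. (x - \<mu>) * g x"])
    show "DERIV (\<lambda>x. (x - \<mu>) * g x) x :> g x + \<beta> * (k' x * g x)" for x
      unfolding k'_def by (auto intro!: derivative_eq_intros Dg simp: algebra_simps)
    show "isCont (\<lambda>x. g x + \<beta> * (k' x * g x)) x" for x by (intro continuous_intros cg ck)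
    show "integrable lborel (\<lambda>x. g x + \<beta> * (k' x * g x))" using Ig Ik by auto
  qed (use L1 in auto)
  have R1: "Z + \<beta> * K = 0" using F1 Ig Ik by (simp add: Z_def K_def)
  have F2: "(LINT x|lborel. k' x * g x + h x * g x + \<beta> * (h x * k' x * g x)) = 0"
  proof (rule FTC_zero[where F="\<lambda>x. h x * (x - \<mu>) * g x"])
    show "DERIV (\<lambda>x. h x * (x - \<mu>) * g x) x :> k' x * g x + h x * g x + \<beta> * (h x * k' x * g x)" for x
      unfolding k'_def by (auto intro!: derivative_eq_intros Dg D0 simp: algebra_simps)
    show "isCont (\<lambda>x. k' x * g x + h x * g x + \<beta> * (h x * k' x * g x)) x" for x
      by (intro continuous_intros cg ck ch)
    show "integrable lborel (\<lambda>x. k' x * g x + h x * g x + \<beta> * (h x * k' x * g x))" using Ik Ih Ihk by auto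
  qed (use L2 in auto)
  have R2: "K + A + \<beta> * HK = 0" using F2 Ik Ih Ihk by (simp add: K_def A_def HK_def)
  have F3: "(LINT x|lborel. 2 * (k' x * g x) + r' x * g x + \<beta> * (k' x * k' x * g x)) = 0"
  proof (rule FTC_zero[where F="\<lambda>x. (x - \<mu>)\<^sup>2 * h1 x * g x"])
    show "DERIV (\<lambda>x. (x - \<mu>)\<^sup>2 * h1 x * g x) x :> 2 * (k' x * g x) + r' x * g x + \<beta> * (k' x * k' x * g x)" for x
      unfolding k'_def r'_def by (auto intro!: derivative_eq_intros Dg D1 simp: algebra_simps power2_eq_square)
    show "isCont (\<lambda>x. 2 * (k' x * g x) + r' x * g x + \<beta> * (k' x * k' x * g x)) x" for x
      by (intro continuous_intros cg ck cr)
    show "integrable lborel (\<lambda>x. 2 * (k' x * g x) + r' x * g x + \<beta> * (k' x * k' x * g x))" using Ik Ir Ikk by auto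
  qed (use L3 in auto)
  have R3: "2 * K + RR + \<beta> * KK = 0" using F3 Ik Ir Ikk by (simp add: K_def RR_def KK_def)
  have E: "Ebeta f \<beta> \<phi> = (LINT x|lborel. \<phi> x * g x) / Z" for \<phi>
    by (simp add: Ebeta_def g_def Z_def)
  have Eh: "Ebeta f \<beta> h = A / Z" by (simp add: E A_def)
  have Ek: "Ebeta f \<beta> k' = K / Z" by (simp add: E K_def)
  have V: "Vfun f \<mu> \<beta> = (HK - (K/Z) * A - (A/Z) * K + (A/Z) * (K/Z) * Z) / Z"
  proof -
    have "Vfun f \<mu> \<beta> = Ebeta f \<beta> (\<lambda>x. (h x - A / Z) * (k' x - K / Z))"
      by (simp add: Vfun_def Covbeta_def kfun_eq Eh Ek flip: h_def)
    also have "\<dots> = (LINT x|lborel. (h x - A / Z) * (k' x - K / Z) * g x) / Z" by (rule E)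
    also have "(LINT x|lborel. (h x - A / Z) * (k' x - K / Z) * g x) = HK - (K/Z) * A - (A/Z) * K + (A/Z) * (K/Z) * Z"
      unfolding HK_def A_def K_def Z_def by (rule cov_lin[OF Ig Ih Ik Ihk])
    finally show ?thesis .
  qed
  have I: "Ifun f \<beta> = (HH - (A/Z) * A - (A/Z) * A + (A/Z) * (A/Z) * Z) / Z"
  proof -
    have "Ifun f \<beta> = Ebeta f \<beta> (\<lambda>x. (h x - A / Z)\<^sup>2)"
      by (simp add: Ifun_def Varbeta_def Eh flip: h_def)
    also have "\<dots> = (LINT x|lborel. (h x - A / Z) * (h x - A / Z) * g x) / Z"
      by (simp add: E power2_eq_square)
    also have "(LINT x|lborel. (h x - A / Z) * (h x - A / Z) * g x) = HH - (A/Z) * A - (A/Z) * A + (A/Z) * (A/Z) * Z"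
      unfolding HH_def A_def Z_def by (rule cov_lin[OF Ig Ih Ih Ihh])
    finally show ?thesis .
  qed
  have R: "Rfun f \<mu> \<beta> = (RR - K) / Z"
  proof -
    have "Rfun f \<mu> \<beta> = (LINT x|lborel. (r' x - k' x) * g x) / Z"
      by (simp add: Rfun_def kfun_eq rfun_eq E)
    also have "(LINT x|lborel. (r' x - k' x) * g x) = (LINT x|lborel. r' x * g x - k' x * g x)"
      by (simp add: algebra_simps)
    also have "\<dots> = RR - K" unfolding RR_def K_def using Ir Ik by (rule Bochner_Integration.integral_diff)
    finally show ?thesis .
  qed
  define u where "u = (\<lambda>x. h x - k' x / 2)"
  have ug: "(\<lambda>x. u x * g x) = (\<lambda>x. h x * g x - (1/2) * (k' x * g x))"
    by (simp add: fun_eq_iff u_def algebra_simps)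
  have uug: "(\<lambda>x. u x * u x * g x) = (\<lambda>x. h x * h x * g x - h x * k' x * g x + (1/4) * (k' x * k' x * g x))"
    by (simp add: fun_eq_iff u_def algebra_simps)
  have Iu: "integrable lborel (\<lambda>x. u x * g x)" unfolding ug using Ih Ik by auto
  have Iuu: "integrable lborel (\<lambda>x. u x * u x * g x)" unfolding uug using Ihh Ihk Ikk by auto
  have Uval: "(LINT x|lborel. u x * g x) = A - K / 2"
    unfolding ug A_def K_def using Ih Ik by simp
  have UUval: "(LINT x|lborel. u x * u x * g x) = HH - HK + KK / 4"
    unfolding uug HH_def HK_def KK_def using Ihh Ihk Ikk by simp
  have W: "Varbeta f \<beta> (\<lambda>x. hfun f x - kfun f \<mu> x / 2) =
      ((HH - HK + KK / 4) - ((A - K/2)/Z) * (A - K/2) - ((A - K/2)/Z) * (A - K/2) + ((A - K/2)/Z) * ((A - K/2)/Z) * Z) / Z"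
  proof -
    have eu: "Ebeta f \<beta> u = (A - K/2) / Z" by (simp add: E Uval)
    have "Varbeta f \<beta> (\<lambda>x. hfun f x - kfun f \<mu> x / 2) = Varbeta f \<beta> u"
      by (simp add: u_def kfun_eq flip: h_def)
    also have "\<dots> = (LINT x|lborel. (u x - (A - K/2) / Z) * (u x - (A - K/2) / Z) * g x) / Z"
      by (simp only: Varbeta_def eu) (simp add: E power2_eq_square)
    also have "(LINT x|lborel. (u x - (A - K/2) / Z) * (u x - (A - K/2) / Z) * g x) =
       (LINT x|lborel. u x * u x * g x) - ((A - K/2)/Z) * (LINT x|lborel. u x * g x)
        - ((A - K/2)/Z) * (LINT x|lborel. u x * g x) + ((A - K/2)/Z) * ((A - K/2)/Z) * (LINT x|lborel. g x)"
      by (rule cov_lin[OF Ig Iu Iu Iuu])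
    finally show ?thesis by (simp add: Uval UUval Z_def)
  qed
  show ?thesis
  proof (cases "Z = 0")
    case True
    then show ?thesis by (simp add: V I R W)
  next
    case False
    have K: "K = - Z / \<beta>" using R1 beta by (simp add: field_simps)
    have HKv: "HK = - (K + A) / \<beta>" using R2 beta by (simp add: field_simps)
    have RRv: "RR = - 2 * K - \<beta> * KK" using R3 by simp
    show ?thesis unfolding V I R W RRv HKv unfolding K using False beta
      by (simp add: field_simps)
  qed
qed

end
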